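(* Let $A>1$. If a subset $B\subset(\mathbf R_{\ge0})^2$ contains no $(A+1)$-subgeometric sequence (i.e. there is no $(A+1)$-subgeometric sequence all of whose terms lie in $B$), then $B$ is $A$-small.
   Context: $(\mathbf R_{\ge0})^2$ carries the norm $\|(x,y)\|=x+y$ and associated $\ell^1$ distance; $\mathrm{diam}$ denotes diameter for this distance. For $U\subset(\mathbf R_{\ge0})^2$, $m_U=\inf\{\|(x,y)\|:(x,y)\in U\}$. A sequence $(U_n)$ of subsets is disjointly unbounded if $U_{n+1}\cap\bigcup_{i\le n}U_i=\emptyset$ for all $n$ and $m_{U_n}\to\infty$; it is $A$-bounded if $\mathrm{diam}(U_n\cup U_{n-1})\le A\cdot m_{U_{n-1}}$ for all $n$. $B$ is $A$-small if for every disjointly unbounded $A$-bounded sequence $(U_n)$ there exists $n_0$ with $U_{n_0}\cap B=\emptyset$. For a real $A'>0$, a sequence $((x_n,y_n))_{n\in\mathbf N}$ in $(\mathbf R_{\ge0})^2$ is $A'$-subgeometric if $\|(x_n,y_n)\|\to\infty$ and there is $n_0$ such that $\|(x_n,y_n)\|\le A'\|(x_{n-1},y_{n-1})\|$ for all $n\ge n_0$. *)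

theory Defs
  imports "HOL-Analysis.Analysis" "HOL-Library.Extended_Real"
begin

definition quadrant :: "(real \<times> real) set" where
  "quadrant = {p. 0 \<le> fst p \<and> 0 \<le> snd p}"

definition qnorm :: "real \<times> real \<Rightarrow> real" where
  "qnorm p = fst p + snd p"

definition l1dist :: "real \<times> real \<Rightarrow> real \<times> real \<Rightarrow> real" where
  "l1dist p q = \<bar>fst p - fst q\<bar> + \<bar>snd p - snd q\<bar>"

definition l1diam :: "(real \<times> real) set \<Rightarrow> ereal" where
  "l1diam U = (SUP p\<in>U. SUP q\<in>U. ereal (l1dist p q))"

text \<open>m_U = inf of norms over U (extended reals; +infinity for empty U).\<close>
definition mU :: "(real \<times> real) set \<Rightarrow> ereal" where
  "mU U = (INF p\<in>U. ereal (qnorm p))"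

definition disjointly_unbounded :: "(nat \<Rightarrow> (real \<times> real) set) \<Rightarrow> bool" where
  "disjointly_unbounded U \<longleftrightarrow>
     (\<forall>n. U (Suc n) \<inter> (\<Union>i\<le>n. U i) = {}) \<and> (\<lambda>n. mU (U n)) \<longlonglongrightarrow> \<infinity>"

definition A_bounded :: "real \<Rightarrow> (nat \<Rightarrow> (real \<times> real) set) \<Rightarrow> bool" where
  "A_bounded A U \<longleftrightarrow> (\<forall>n\<ge>1. l1diam (U n \<union> U (n - 1)) \<le> ereal A * mU (U (n - 1)))"

definition A_small :: "real \<Rightarrow> (real \<times> real) set \<Rightarrow> bool" where
  "A_small A B \<longleftrightarrow>
     (\<forall>U. (\<forall>n. U n \<subseteq> quadrant) \<and> disjointly_unbounded U \<and> A_bounded A U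
          \<longrightarrow> (\<exists>n0. U n0 \<inter> B = {}))"

definition subgeometric :: "real \<Rightarrow> (nat \<Rightarrow> real \<times> real) \<Rightarrow> bool" where
  "subgeometric A' p \<longleftrightarrow>
     (\<forall>n. p n \<in> quadrant) \<and>
     filterlim (\<lambda>n. qnorm (p n)) at_top sequentially \<and>
     (\<exists>n0. \<forall>n\<ge>n0. n \<ge> 1 \<longrightarrow> qnorm (p n) \<le> A' * qnorm (p (n - 1)))"

end

theory Submission
  imports Defs
begin

theorem lemmaA:
  fixes A :: real and B :: "(real \<times> real) set"
  assumes "A > 1"
    and "B \<subseteq> quadrant"
    and "\<not> (\<exists>p. subgeometric (A + 1) p \<and> (\<forall>n. p n \<in> B))"
  shows "A_small A B"
  unfolding A_small_def
proof (intro allI impI, rule ccontr)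
  fix U :: "nat \<Rightarrow> (real \<times> real) set"
  assume H: "(\<forall>n. U n \<subseteq> quadrant) \<and> disjointly_unbounded U \<and> A_bounded A U"
    and N: "\<not> (\<exists>n0. U n0 \<inter> B = {})"
  have "\<forall>n. \<exists>q. q \<in> U n \<inter> B" using N by blast
  then obtain p where p: "\<And>n. p n \<in> U n \<inter> B" by metis
  have pq: "p n \<in> quadrant" for n using p assms(2) by blast
  have qn0: "0 \<le> qnorm (p n)" for n using pq[of n] by (simp add: quadrant_def qnorm_def)
  have mle: "mU (U n) \<le> ereal (qnorm (p n))" for n
    unfolding mU_def using p[of n] by (meson IntD1 INF_lower)
  have m0: "0 \<le> mU (U n)" for n
    unfolding mU_def using H by (auto intro!: INF_greatest simp: quadrant_def qnorm_def subset_iff)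
  have lim: "(\<lambda>n. mU (U n)) \<longlonglongrightarrow> \<infinity>" using H by (simp add: disjointly_unbounded_def)
  have tl: "filterlim (\<lambda>n. qnorm (p n)) at_top sequentially"
    unfolding filterlim_at_top
  proof
    fix Z :: real
    have "eventually (\<lambda>n. mU (U n) > ereal Z) sequentially"
      using lim by (simp add: tendsto_PInfty)
    then show "eventually (\<lambda>n. qnorm (p n) \<ge> Z) sequentially"
    proof (rule eventually_mono)
      fix n assume "mU (U n) > ereal Z"
      then have "ereal Z < ereal (qnorm (p n))" using mle[of n] by order
      then show "qnorm (p n) \<ge> Z" by simp
    qed
  qed
  have step: "qnorm (p n) \<le> (A + 1) * qnorm (p (n - 1))" if "n \<ge> 1" for n
  proof -
    have "ereal (l1dist (p n) (p (n - 1))) \<le> l1diam (U n \<union> U (n - 1))"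
      unfolding l1diam_def using p[of n] p[of "n-1"]
      by (meson IntD1 SUP_upper2 UnI1 UnI2 order_refl)
    also have "\<dots> \<le> ereal A * mU (U (n - 1))"
      using H that by (simp add: A_bounded_def)
    also have "\<dots> \<le> ereal A * ereal (qnorm (p (n - 1)))"
      using mle[of "n-1"] assms(1) by (intro ereal_mult_left_mono) auto
    finally have "l1dist (p n) (p (n - 1)) \<le> A * qnorm (p (n - 1))" by simp
    moreover have "qnorm (p n) \<le> qnorm (p (n - 1)) + l1dist (p n) (p (n - 1))"
      by (simp add: qnorm_def l1dist_def)
    ultimately show ?thesis by (simp add: algebra_simps)
  qed
  have "subgeometric (A + 1) p" unfolding subgeometric_def
    using pq tl step by blast
  moreover have "\<forall>n. p n \<in> B" using p by blast
  ultimately show False using assms(3) by blast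
qed

end
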